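(* Let $F_1,\ldots,F_p$ be continuous univariate cumulative distribution functions and let $g:[0,1]^p\to\mathbb R$. If the map $\mathbf x\mapsto g(F_1(x_1),\ldots,F_p(x_p))$ is continuous on $[-\infty,\infty]^p$, then $g$ is continuous on $[0,1]^p$.
   Context: Cumulative distribution functions are extended to $[-\infty,\infty]$ by $F_j(-\infty)=0$, $F_j(+\infty)=1$. *)

theory Defs
  imports "HOL-Probability.Probability"
begin

definition ext_cdf :: "(real \<Rightarrow> real) \<Rightarrow> ereal \<Rightarrow> real" where
  "ext_cdf F t = (case t of ereal x \<Rightarrow> F x | PInfty \<Rightarrow> 1 | MInfty \<Rightarrow> 0)"

end

theory Submission imports Defs begin

lemma cont_Icc:
  fixes f :: "real \<Rightarrow> 'a::topological_space"
  assumes "\<And>x. -1 < x \<Longrightarrow> x < 1 \<Longrightarrow> isCont f x"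
    "(f \<longlongrightarrow> f 1) (at_left 1)" "(f \<longlongrightarrow> f (-1)) (at_right (-1))"
  shows "continuous_on {-1..1} f"
  unfolding continuous_on_def
proof
  fix x :: real assume x: "x \<in> {-1..1}"
  show "(f \<longlongrightarrow> f x) (at x within {-1..1})"
  proof (cases "x = 1")
    case True thus ?thesis using assms(2) by (simp add: at_within_Icc_at_left)
  next
    case n1: False
    show ?thesis
    proof (cases "x = -1")
      case True thus ?thesis using assms(3) by (simp add: at_within_Icc_at_right)
    next
      case False
      with n1 x have "-1 < x" "x < 1" by auto
      thus ?thesis using assms(1) by (simp add: at_within_Icc_at isCont_def)
    qed
  qed
qed

lemma lim_top: "filterlim (\<lambda>x::real. x / (1 - \<bar>x\<bar>)) at_top (at_left 1)"
proof -
  have "filterlim (\<lambda>x::real. x / (1 - x)) at_top (at_left 1)" by real_asymp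
  moreover have "eventually (\<lambda>x::real. x / (1 - x) = x / (1 - \<bar>x\<bar>)) (at_left 1)"
    using eventually_at_left_real[of 0 "1::real"] by (auto elim!: eventually_mono)
  ultimately show ?thesis by (rule filterlim_mono_eventually[OF _ order_refl order_refl])
qed

lemma lim_bot: "filterlim (\<lambda>x::real. x / (1 - \<bar>x\<bar>)) at_bot (at_right (-1))"
proof -
  have "filterlim (\<lambda>x::real. x / (1 + x)) at_bot (at_right (-1))" by real_asymp
  moreover have "eventually (\<lambda>x::real. x / (1 + x) = x / (1 - \<bar>x\<bar>)) (at_right (-1))"
    using eventually_at_right_real[of "-1" "0::real"] by (auto elim!: eventually_mono)
  ultimately show ?thesis by (rule filterlim_mono_eventually[OF _ order_refl order_refl])
qed

lemma interior_eq:
  fixes f g :: "real \<Rightarrow> 'a::topological_space"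
  assumes "-1 < x" "x < 1" "\<And>y. -1 < y \<Longrightarrow> y < 1 \<Longrightarrow> f y = g y" "isCont g x"
  shows "isCont f x"
proof -
  have "eventually (\<lambda>y. y \<in> {-1<..<1}) (nhds x)"
    using assms(1,2) by (intro eventually_nhds_in_open) auto
  hence ev: "eventually (\<lambda>y. g y = f y) (nhds x)" by (auto elim!: eventually_mono simp: assms(3))
  have "f x = g x" using assms by auto
  show ?thesis
  proof -
    have "eventually (\<lambda>y. g y = f y) (at x)" using ev unfolding eventually_at_filter by (auto elim: eventually_mono)
    thus ?thesis using assms(4) \<open>f x = g x\<close> unfolding isCont_def by (metis Lim_transform_eventually)
  qed
qed

lemma rd_facts:
  assumes "real_distribution M"
  shows "(cdf M \<longlongrightarrow> 0) at_bot" "(cdf M \<longlongrightarrow> 1) at_top" "0 \<le> cdf M x" "cdf M x \<le> 1"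
proof -
  interpret real_distribution M by fact
  show "(cdf M \<longlongrightarrow> 0) at_bot" by (rule cdf_lim_at_bot)
  show "(cdf M \<longlongrightarrow> 1) at_top" by (rule cdf_lim_at_top_prob)
  show "0 \<le> cdf M x" by (rule cdf_nonneg)
  show "cdf M x \<le> 1" by (rule cdf_bounded_prob)
qed

definition phi :: "real \<Rightarrow> real" where "phi x = x / (1 - \<bar>x\<bar>)"
definition ee :: "real \<Rightarrow> ereal" where
  "ee x = (if 1 \<le> x then PInfty else if x \<le> -1 then MInfty else ereal (phi x))"

lemma isCont_phi: "-1 < x \<Longrightarrow> x < 1 \<Longrightarrow> isCont phi x"
  unfolding phi_def by (intro continuous_intros) auto

lemma cont_ee: "continuous_on {-1..1} ee"
proof (rule cont_Icc)
  fix x :: real assume x: "-1 < x" "x < 1"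
  show "isCont ee x"
    by (rule interior_eq[OF x, of _ "\<lambda>y. ereal (phi y)"]) (auto simp: ee_def intro!: isCont_phi x continuous_intros)
next
  have "((\<lambda>x. ereal (phi x)) \<longlongrightarrow> \<infinity>) (at_left 1)"
    unfolding tendsto_PInfty_eq_at_top phi_def by (rule lim_top)
  moreover have "eventually (\<lambda>x. ereal (phi x) = ee x) (at_left (1::real))"
    using eventually_at_left_real[of 0 "1::real"] by (auto simp: ee_def elim!: eventually_mono)
  ultimately show "(ee \<longlongrightarrow> ee 1) (at_left 1)" by (simp add: ee_def Lim_transform_eventually)
next
  have "filterlim (\<lambda>x. - phi x) at_top (at_right (-1))"
    unfolding phi_def filterlim_uminus_at_top using lim_bot by simp
  hence "((\<lambda>x. ereal (- phi x)) \<longlongrightarrow> \<infinity>) (at_right (-1))"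
    unfolding tendsto_PInfty_eq_at_top .
  hence "((\<lambda>x. - ereal (- phi x)) \<longlongrightarrow> - \<infinity>) (at_right (-1))"
    by (intro tendsto_uminus_ereal)
  hence "((\<lambda>x. ereal (phi x)) \<longlongrightarrow> - \<infinity>) (at_right (-1))" by simp
  moreover have "eventually (\<lambda>x. ereal (phi x) = ee x) (at_right (-1::real))"
    using eventually_at_right_real[of "-1" "0::real"] by (auto simp: ee_def elim!: eventually_mono)
  ultimately show "(ee \<longlongrightarrow> ee (-1)) (at_right (-1))" by (simp add: ee_def Lim_transform_eventually)
qed

lemma cont_c:
  assumes M: "real_distribution M" "F = cdf M" and cF: "continuous_on UNIV F"
  shows "continuous_on {-1..1} (\<lambda>x. ext_cdf F (ee x))"
proof (rule cont_Icc)
  fix x :: real assume x: "-1 < x" "x < 1"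
  show "isCont (\<lambda>x. ext_cdf F (ee x)) x"
  proof (rule interior_eq[OF x, of _ "\<lambda>y. F (phi y)"])
    show "isCont (\<lambda>y. F (phi y)) x"
      using cF isCont_phi[OF x] by (metis continuous_on_eq_continuous_at isCont_o2 open_UNIV UNIV_I)
  qed (auto simp: ee_def ext_cdf_def)
next
  have "(F \<longlongrightarrow> 1) at_top" using M rd_facts by blast
  hence "((\<lambda>x. F (phi x)) \<longlongrightarrow> 1) (at_left 1)"
    unfolding phi_def using lim_top by (rule filterlim_compose)
  moreover have "eventually (\<lambda>x. F (phi x) = ext_cdf F (ee x)) (at_left (1::real))"
    using eventually_at_left_real[of 0 "1::real"] by (auto simp: ee_def ext_cdf_def elim!: eventually_mono)
  ultimately show "((\<lambda>x. ext_cdf F (ee x)) \<longlongrightarrow> ext_cdf F (ee 1)) (at_left 1)"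
    by (simp add: ee_def ext_cdf_def Lim_transform_eventually)
next
  have "(F \<longlongrightarrow> 0) at_bot" using M rd_facts by blast
  hence "((\<lambda>x. F (phi x)) \<longlongrightarrow> 0) (at_right (-1))"
    unfolding phi_def using lim_bot by (rule filterlim_compose)
  moreover have "eventually (\<lambda>x. F (phi x) = ext_cdf F (ee x)) (at_right (-1::real))"
    using eventually_at_right_real[of "-1" "0::real"] by (auto simp: ee_def ext_cdf_def elim!: eventually_mono)
  ultimately show "((\<lambda>x. ext_cdf F (ee x)) \<longlongrightarrow> ext_cdf F (ee (-1))) (at_right (-1))"
    by (simp add: ee_def ext_cdf_def Lim_transform_eventually)
qed

lemma c_range:
  assumes M: "real_distribution M" "F = cdf M"
  shows "0 \<le> ext_cdf F t \<and> ext_cdf F t \<le> 1"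
  using rd_facts(3,4)[OF M(1)] M(2)
  by (cases t) (auto simp: ext_cdf_def)

theorem lemma4p1:
  fixes F :: "'n::finite \<Rightarrow> real \<Rightarrow> real" and g :: "real^'n \<Rightarrow> real"
  assumes cdfs: "\<forall>j. \<exists>M. real_distribution M \<and> F j = cdf M"
    and cont_F: "\<forall>j. continuous_on UNIV (F j)"
    and cont_comp: "continuous_on UNIV (\<lambda>x::ereal^'n. g (\<chi> j. ext_cdf (F j) (x $ j)))"
  shows "continuous_on {u::real^'n. \<forall>j. 0 \<le> u $ j \<and> u $ j \<le> 1} g"
proof -
  define S where "S = {u::real^'n. \<forall>j. 0 \<le> u $ j \<and> u $ j \<le> 1}"
  obtain M where M: "\<And>j. real_distribution (M j)" "\<And>j. F j = cdf (M j)" using cdfs by metis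
  define c where "c j x = ext_cdf (F j) (ee x)" for j x
  define K where "K = {t::real^'n. \<forall>j. -1 \<le> t$j \<and> t$j \<le> 1}"
  define \<psi> where "\<psi> t = (\<chi> j. c j (t$j))" for t
  have cc: "continuous_on {-1..1} (c j)" for j
    unfolding c_def using cont_c[OF M(1) M(2)] cont_F by blast
  have compo: "continuous_on K (\<lambda>t. h (t $ j))" if "continuous_on {-1..1} h" for j and h :: "real \<Rightarrow> 'b::topological_space"
    by (rule continuous_on_compose2[OF that continuous_on_component[OF continuous_on_id]]) (auto simp: K_def)
  have cpsi: "continuous_on K \<psi>"
    unfolding \<psi>_def by (intro continuous_on_vec_lambda compo cc)
  have cE: "continuous_on K (\<lambda>t. \<chi> j. ee (t$j))"
    by (intro continuous_on_vec_lambda compo cont_ee)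
  have "continuous_on K ((\<lambda>x::ereal^'n. g (\<chi> j. ext_cdf (F j) (x $ j))) \<circ> (\<lambda>t. \<chi> j. ee (t$j)))"
    by (rule continuous_on_compose[OF cE continuous_on_subset[OF cont_comp]]) auto
  moreover have "((\<lambda>x::ereal^'n. g (\<chi> j. ext_cdf (F j) (x $ j))) \<circ> (\<lambda>t. \<chi> j. ee (t$j))) = g \<circ> \<psi>"
    by (auto simp: \<psi>_def c_def)
  ultimately have cgpsi: "continuous_on K (g \<circ> \<psi>)" by simp
  have img: "\<psi> ` K = S"
  proof
    show "\<psi> ` K \<subseteq> S"
      using c_range[OF M(1) M(2)] by (auto simp: \<psi>_def S_def c_def)
  next
    show "S \<subseteq> \<psi> ` K"
    proof
      fix u assume u: "u \<in> S"
      have "\<exists>x. -1 \<le> x \<and> x \<le> 1 \<and> c j x = u $ j" for j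
      proof (rule IVT')
        show "continuous_on {-1..1} (c j)" by (rule cc)
      qed (use u in \<open>auto simp: c_def ee_def ext_cdf_def S_def\<close>)
      then obtain t where t: "\<And>j. -1 \<le> t j \<and> t j \<le> 1 \<and> c j (t j) = u $ j" by metis
      have "(\<chi> j. t j) \<in> K" using t by (auto simp: K_def)
      moreover have "u = \<psi> (\<chi> j. t j)" using t by (auto simp: \<psi>_def vec_eq_iff)
      ultimately show "u \<in> \<psi> ` K" by blast
    qed
  qed
  have "K = cbox (vec (-1)) (vec 1)" by (auto simp: K_def mem_box_cart)
  hence compK: "compact K" by simp
  have closedS: "closed S"
  proof -
    have "S = {u. \<forall>j. u $ j \<in> {0..1}}" by (auto simp: S_def)
    moreover have "closed {u::real^'n. \<forall>j. u $ j \<in> {0..1}}"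
      by (rule closed_vector_box) simp
    ultimately show ?thesis by simp
  qed
  have "continuous_on S g"
    unfolding continuous_on_closed_vimage[OF closedS]
  proof (intro allI impI)
    fix B :: "real set" assume B: "closed B"
    have "closed ((g \<circ> \<psi>) -` B \<inter> K)"
      using continuous_on_closed_vimage[OF compact_imp_closed[OF compK], of "g \<circ> \<psi>"] cgpsi B by blast
    hence "compact ((g \<circ> \<psi>) -` B \<inter> K)" using compK
      by (metis Int_absorb2 Int_assoc Int_lower2 closed_Int_compact)
    hence "compact (\<psi> ` ((g \<circ> \<psi>) -` B \<inter> K))"
      by (rule compact_continuous_image[OF continuous_on_subset[OF cpsi], rotated]) auto
    moreover have "\<psi> ` ((g \<circ> \<psi>) -` B \<inter> K) = g -` B \<inter> S"
    proof
      show "\<psi> ` ((g \<circ> \<psi>) -` B \<inter> K) \<subseteq> g -` B \<inter> S" using img by auto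
      show "g -` B \<inter> S \<subseteq> \<psi> ` ((g \<circ> \<psi>) -` B \<inter> K)"
      proof
        fix u assume "u \<in> g -` B \<inter> S"
        then obtain t where "t \<in> K" "u = \<psi> t" "g u \<in> B" using img by (metis IntE imageE vimageE)
        thus "u \<in> \<psi> ` ((g \<circ> \<psi>) -` B \<inter> K)" by auto
      qed
    qed
    ultimately show "closed (g -` B \<inter> S)" by (metis compact_imp_closed)
  qed
  thus ?thesis by (simp add: S_def)
qed

end
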